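(* Let $r\ge2$, let $(\mathbb{X},\mathcal{X})$ be a Polish space and $H_0$ a probability measure on $\mathbb{X}$. Define random probability measures $G_i=\sum_{k\ge1}W_{ik}\delta_{\tilde\varphi_{0k}}$, $i=1,\dots,r$, where $(\tilde\varphi_{0k})_{k\ge1}$ is i.i.d. with law $H_0$ (so all $G_i$ share the same atoms), $W_{ik}=S_{ik}\prod_{j<k}(1-S_{ij})$, with $S_k=(S_{1k},\dots,S_{rk})$, $k\ge1$, i.i.d. random vectors in $[0,1]^r$ independent of $(\tilde\varphi_{0k})_k$ and such that $\sum_{k\ge1}W_{ik}=1$ a.s. for every $i$. Then for every measurable $A\subseteq\mathbb{X}$ with $0<H_0(A)<1$, \[ \mathrm{Cor}(G_1(A),G_2(A))=C_{1,2}:=\frac{\mathbb{E}[S_{11}S_{21}]}{1-\mathbb{E}[(1-S_{11})(1-S_{21})]}\sqrt{\frac{(2\mathbb{E}[S_{11}]-\mathbb{E}[S_{11}^2])(2\mathbb{E}[S_{21}]-\mathbb{E}[S_{21}^2])}{\mathbb{E}[S_{11}^2]\,\mathbb{E}[S_{21}^2]}}. \]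
   Context: $\delta_x$ is the Dirac mass at $x$; empty products equal $1$. *)

theory Defs
  imports "HOL-Probability.Probability"
begin

definition covar :: "'a measure \<Rightarrow> ('a \<Rightarrow> real) \<Rightarrow> ('a \<Rightarrow> real) \<Rightarrow> real" where
  "covar M X Y = integral\<^sup>L M (\<lambda>\<omega>. (X \<omega> - integral\<^sup>L M X) * (Y \<omega> - integral\<^sup>L M Y))"

definition cor :: "'a measure \<Rightarrow> ('a \<Rightarrow> real) \<Rightarrow> ('a \<Rightarrow> real) \<Rightarrow> real" where
  "cor M X Y = covar M X Y / (sqrt (covar M X X) * sqrt (covar M Y Y))"

text \<open>Stick-breaking weights (0-based atom index k): W i k = S i k * prod_{j<k} (1 - S i j).\<close>
definition sb_weight :: "(nat \<Rightarrow> nat \<Rightarrow> 'a \<Rightarrow> real) \<Rightarrow> nat \<Rightarrow> nat \<Rightarrow> 'a \<Rightarrow> real" where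
  "sb_weight S i k \<omega> = S i k \<omega> * (\<Prod>j<k. 1 - S i j \<omega>)"

definition G_meas :: "(nat \<Rightarrow> nat \<Rightarrow> 'a \<Rightarrow> real) \<Rightarrow> (nat \<Rightarrow> 'a \<Rightarrow> 'x) \<Rightarrow> nat \<Rightarrow> 'a \<Rightarrow> 'x set \<Rightarrow> real" where
  "G_meas S phi i \<omega> A = (\<Sum>k. sb_weight S i k \<omega> * indicator A (phi k \<omega>))"

end

theory Submission
  imports Defs
begin

locale cs =
  fixes M :: "'a measure" and H0 :: "'x::polish_space measure"
    and r :: nat and S :: "nat \<Rightarrow> nat \<Rightarrow> 'a \<Rightarrow> real" and phi :: "nat \<Rightarrow> 'a \<Rightarrow> 'x"
    and A :: "'x set"
  assumes M: "prob_space M"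
    and r: "r \<ge> 2"
    and H0: "prob_space H0" "sets H0 = sets borel"
    and phi_indep: "prob_space.indep_vars M (\<lambda>_. borel) phi UNIV"
    and phi_law: "\<And>k. distr M borel (phi k) = H0"
    and S_range: "\<And>i k \<omega>. i \<in> {1..r} \<Longrightarrow> \<omega> \<in> space M \<Longrightarrow> S i k \<omega> \<in> {0..1}"
    and S_indep: "prob_space.indep_vars M (\<lambda>_. PiM {1..r} (\<lambda>_. borel))
                    (\<lambda>k \<omega>. restrict (\<lambda>i. S i k \<omega>) {1..r}) UNIV"
    and S_ident: "\<And>k. distr M (PiM {1..r} (\<lambda>_. borel)) (\<lambda>\<omega>. restrict (\<lambda>i. S i k \<omega>) {1..r})
                     = distr M (PiM {1..r} (\<lambda>_. borel)) (\<lambda>\<omega>. restrict (\<lambda>i. S i 0 \<omega>) {1..r})"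
    and S_phi_indep: "prob_space.indep_set M
          {(\<lambda>\<omega> k. restrict (\<lambda>i. S i k \<omega>) {1..r}) -` B \<inter> space M | B.
              B \<in> sets (PiM UNIV (\<lambda>_. PiM {1..r} (\<lambda>_. borel)))}
          {(\<lambda>\<omega> k. phi k \<omega>) -` B \<inter> space M | B. B \<in> sets (PiM UNIV (\<lambda>_. borel))}"
    and W_sum: "\<And>i. i \<in> {1..r} \<Longrightarrow> AE \<omega> in M. (\<lambda>k. sb_weight S i k \<omega>) sums 1"
    and A: "A \<in> sets borel" "0 < measure H0 A" "measure H0 A < 1"

sublocale cs \<subseteq> prob_space M by (rule M)

context cs begin

definition "Yv k \<omega> = restrict (\<lambda>i. S i k \<omega>) {1..r}"
definition "Sig \<omega> = (\<lambda>k. Yv k \<omega>)"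
definition "Phi \<omega> = (\<lambda>k. phi k \<omega>)"
definition "p = measure H0 A"
definition "xx k \<omega> = (indicator A (phi k \<omega>) :: real)"
abbreviation "PS \<equiv> PiM {1..r} (\<lambda>_. borel :: real measure)"
abbreviation "PSS \<equiv> PiM UNIV (\<lambda>_::nat. PS)"
abbreviation "PP \<equiv> PiM UNIV (\<lambda>_::nat. borel :: 'x measure)"

lemma Yv_meas[measurable]: "Yv k \<in> measurable M PS"
  using S_indep unfolding indep_vars_def2 Yv_def by auto

lemma phi_meas[measurable]: "phi k \<in> borel_measurable M"
  using phi_indep unfolding indep_vars_def2 by auto

lemma S_meas: "i \<in> {1..r} \<Longrightarrow> S i k \<in> borel_measurable M"
proof -
  assume i: "i \<in> {1..r}"
  have "(\<lambda>\<omega>. Yv k \<omega> i) \<in> borel_measurable M"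
    by (rule measurable_compose[OF Yv_meas measurable_component_singleton]) (use i in auto)
  moreover have "(\<lambda>\<omega>. Yv k \<omega> i) = S i k" using i by (auto simp: Yv_def)
  ultimately show ?thesis by simp
qed

lemma Sig_meas[measurable]: "Sig \<in> measurable M PSS"
proof -
  have "(\<lambda>\<omega>. \<lambda>k\<in>UNIV. Yv k \<omega>) \<in> measurable M PSS"
    by (rule measurable_restrict) (rule Yv_meas)
  moreover have "(\<lambda>\<omega>. \<lambda>k\<in>UNIV. Yv k \<omega>) = Sig" by (auto simp: Sig_def fun_eq_iff)
  ultimately show ?thesis by simp
qed

lemma Phi_meas[measurable]: "Phi \<in> measurable M PP"
proof -
  have "(\<lambda>\<omega>. \<lambda>k\<in>UNIV. phi k \<omega>) \<in> measurable M PP"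
    by (rule measurable_restrict) (rule phi_meas)
  moreover have "(\<lambda>\<omega>. \<lambda>k\<in>UNIV. phi k \<omega>) = Phi" by (auto simp: Phi_def fun_eq_iff)
  ultimately show ?thesis by simp
qed

lemma comp_meas[measurable]: "i \<in> {1..r} \<Longrightarrow> (\<lambda>\<sigma>. \<sigma> k i) \<in> borel_measurable PSS"
proof -
  assume i: "i \<in> {1..r}"
  have "(\<lambda>\<sigma>. \<sigma> k) \<in> measurable PSS PS" by (rule measurable_component_singleton) simp
  then show ?thesis by (rule measurable_compose) (rule measurable_component_singleton, rule i)
qed

lemma indep_fg:
  fixes f :: "(nat \<Rightarrow> nat \<Rightarrow> real) \<Rightarrow> real" and g :: "(nat \<Rightarrow> 'x) \<Rightarrow> real"
  assumes f[measurable]: "f \<in> borel_measurable PSS" and g[measurable]: "g \<in> borel_measurable PP"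
  shows "indep_var borel (\<lambda>\<omega>. f (Sig \<omega>)) borel (\<lambda>\<omega>. g (Phi \<omega>))"
proof -
  have base: "indep_set {Sig -` B \<inter> space M |B. B \<in> sets PSS} {Phi -` B \<inter> space M |B. B \<in> sets PP}"
    using S_phi_indep unfolding Sig_def Yv_def Phi_def .
  have sub1: "{(\<lambda>\<omega>. f (Sig \<omega>)) -` C \<inter> space M |C. C \<in> sets borel} \<subseteq> {Sig -` B \<inter> space M |B. B \<in> sets PSS}"
  proof safe
    fix C :: "real set" assume C: "C \<in> sets borel"
    have "(\<lambda>\<omega>. f (Sig \<omega>)) -` C \<inter> space M = Sig -` (f -` C \<inter> space PSS) \<inter> space M"
      using measurable_space[OF Sig_meas] by auto
    moreover have "f -` C \<inter> space PSS \<in> sets PSS" using C by measurable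
    ultimately show "\<exists>B. (\<lambda>\<omega>. f (Sig \<omega>)) -` C \<inter> space M = Sig -` B \<inter> space M \<and> B \<in> sets PSS" by blast
  qed
  have sub2: "{(\<lambda>\<omega>. g (Phi \<omega>)) -` C \<inter> space M |C. C \<in> sets borel} \<subseteq> {Phi -` B \<inter> space M |B. B \<in> sets PP}"
  proof safe
    fix C :: "real set" assume C: "C \<in> sets borel"
    have "(\<lambda>\<omega>. g (Phi \<omega>)) -` C \<inter> space M = Phi -` (g -` C \<inter> space PP) \<inter> space M"
      using measurable_space[OF Phi_meas] by auto
    moreover have "g -` C \<inter> space PP \<in> sets PP" using C by measurable
    ultimately show "\<exists>B. (\<lambda>\<omega>. g (Phi \<omega>)) -` C \<inter> space M = Phi -` B \<inter> space M \<and> B \<in> sets PP" by blast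
  qed
  show ?thesis
    unfolding indep_var_def indep_vars_def2
  proof
    show "\<forall>i\<in>UNIV. random_variable (case_bool borel borel i) (case_bool (\<lambda>\<omega>. f (Sig \<omega>)) (\<lambda>\<omega>. g (Phi \<omega>)) i)"
      by (simp split: bool.split)
    show "indep_sets (\<lambda>i. {case_bool (\<lambda>\<omega>. f (Sig \<omega>)) (\<lambda>\<omega>. g (Phi \<omega>)) i -` A \<inter> space M |A.
        A \<in> sets (case_bool borel borel i)}) UNIV"
      using base unfolding indep_set_def
      by (rule indep_sets_mono_sets) (use sub1 sub2 in \<open>auto split: bool.split\<close>)
  qed
qed

lemma indep_prod:
  fixes f :: "(nat \<Rightarrow> nat \<Rightarrow> real) \<Rightarrow> real" and g :: "(nat \<Rightarrow> 'x) \<Rightarrow> real"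
  assumes f[measurable]: "f \<in> borel_measurable PSS" and g[measurable]: "g \<in> borel_measurable PP"
    and fb: "\<And>\<omega>. \<omega> \<in> space M \<Longrightarrow> \<bar>f (Sig \<omega>)\<bar> \<le> 1"
    and gb: "\<And>\<omega>. \<omega> \<in> space M \<Longrightarrow> \<bar>g (Phi \<omega>)\<bar> \<le> 1"
  shows "(\<integral>\<omega>. f (Sig \<omega>) * g (Phi \<omega>) \<partial>M) = (\<integral>\<omega>. f (Sig \<omega>) \<partial>M) * (\<integral>\<omega>. g (Phi \<omega>) \<partial>M)"
proof (rule indep_var_lebesgue_integral[OF indep_fg[OF f g]])
  show "integrable M (\<lambda>\<omega>. f (Sig \<omega>))"
    by (rule integrable_const_bound[where B=1]) (use fb in auto)
  show "integrable M (\<lambda>\<omega>. g (Phi \<omega>))"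
    by (rule integrable_const_bound[where B=1]) (use gb in auto)
qed

definition "F i k \<sigma> = \<sigma> k i * (\<Prod>j<k. 1 - \<sigma> j i)"
definition "X k (\<psi>::nat \<Rightarrow> 'x) = (indicator A (\<psi> k) :: real)"

lemma F_meas[measurable]: "i \<in> {1..r} \<Longrightarrow> F i k \<in> borel_measurable PSS"
  unfolding F_def by (intro borel_measurable_times borel_measurable_prod borel_measurable_diff comp_meas) auto

lemma X_meas[measurable]: "X k \<in> borel_measurable PP"
proof -
  have "(\<lambda>\<psi>::nat \<Rightarrow> 'x. \<psi> k) \<in> measurable PP borel" by (rule measurable_component_singleton) simp
  then show ?thesis unfolding X_def by (rule measurable_compose[OF _ borel_measurable_indicator[OF A(1)]])
qed

lemma w_Sig: "i \<in> {1..r} \<Longrightarrow> sb_weight S i k \<omega> = F i k (Sig \<omega>)"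
  by (simp add: sb_weight_def F_def Sig_def Yv_def)

lemma xx_Phi: "xx k \<omega> = X k (Phi \<omega>)"
  by (simp add: xx_def X_def Phi_def)

lemma w_meas[measurable]: "i \<in> {1..r} \<Longrightarrow> (\<lambda>\<omega>. sb_weight S i k \<omega>) \<in> borel_measurable M"
  by (simp add: w_Sig measurable_compose[OF Sig_meas F_meas])

lemma xx_meas[measurable]: "xx k \<in> borel_measurable M"
  unfolding xx_def using A(1) by measurable

lemma w_bounds: "i \<in> {1..r} \<Longrightarrow> \<omega> \<in> space M \<Longrightarrow> 0 \<le> sb_weight S i k \<omega> \<and> sb_weight S i k \<omega> \<le> 1"
  using S_range[where i=i and \<omega>=\<omega>] unfolding sb_weight_def
  by (auto intro!: mult_nonneg_nonneg prod_nonneg mult_le_one prod_le_1)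

lemma xx_bounds: "0 \<le> xx k \<omega> \<and> xx k \<omega> \<le> 1"
  by (simp add: xx_def)

lemma int_xx: "(\<integral>\<omega>. xx k \<omega> \<partial>M) = p"
proof -
  have "(\<integral>\<omega>. xx k \<omega> \<partial>M) = (\<integral>y. indicator A y \<partial>distr M borel (phi k))"
    unfolding xx_def by (rule integral_distr[symmetric]) (auto intro: borel_measurable_indicator A(1))
  also have "\<dots> = (\<integral>y. indicator A y \<partial>H0)" by (simp add: phi_law)
  also have "\<dots> = measure H0 A"
  proof -
    have "A \<subseteq> space H0" using A(1) H0(2) sets.sets_into_space by (metis sets_eq_imp_space_eq space_borel subset_UNIV)
    then show ?thesis by (simp add: Int_absorb2)
  qed
  finally show ?thesis by (simp add: p_def)
qed

lemma int_xx2: "(\<integral>\<omega>. xx k \<omega> * xx l \<omega> \<partial>M) = (if k = l then p else p\<^sup>2)"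
proof (cases "k = l")
  case True
  have "(\<lambda>\<omega>. xx k \<omega> * xx l \<omega>) = xx k" using True by (simp add: xx_def indicator_def fun_eq_iff)
  then show ?thesis using int_xx[of k] True by simp
next
  case False
  have ind: "indep_vars (\<lambda>_. borel) xx {k, l}"
  proof -
    have "indep_vars (\<lambda>_. borel) (\<lambda>m \<omega>. indicator A (phi m \<omega>) :: real) UNIV"
      by (rule indep_vars_compose2[OF phi_indep]) (use A(1) in measurable)
    moreover have "(\<lambda>m \<omega>. indicat_real A (phi m \<omega>)) = xx" by (simp add: xx_def fun_eq_iff)
    ultimately show ?thesis using indep_vars_subset by fastforce
  qed
  have "(\<integral>\<omega>. (\<Prod>m\<in>{k,l}. xx m \<omega>) \<partial>M) = (\<Prod>m\<in>{k,l}. \<integral>\<omega>. xx m \<omega> \<partial>M)"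
    by (rule indep_vars_lebesgue_integral[OF _ ind])
       (auto intro!: integrable_const_bound[where B=1] simp: xx_def)
  then show ?thesis using False by (simp add: int_xx power2_eq_square)
qed

lemma comp1[measurable]: "i \<in> {1..r} \<Longrightarrow> (\<lambda>y. y i) \<in> borel_measurable PS"
  by (rule measurable_component_singleton)

lemma ident: fixes g :: "(nat \<Rightarrow> real) \<Rightarrow> real" shows "g \<in> borel_measurable PS \<Longrightarrow> (\<integral>\<omega>. g (Yv m \<omega>) \<partial>M) = (\<integral>\<omega>. g (Yv 0 \<omega>) \<partial>M)"
proof -
  assume g: "g \<in> borel_measurable PS"
  have 1: "(\<integral>y. g y \<partial>distr M PS (Yv m)) = (\<integral>\<omega>. g (Yv m \<omega>) \<partial>M)" for m
    by (rule integral_distr[OF Yv_meas g])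
  have "distr M PS (Yv m) = distr M PS (Yv 0)" using S_ident[of m] by (simp add: Yv_def[abs_def])
  then show ?thesis using 1[of m] 1[of 0] by simp
qed

lemma S_bounds: "i \<in> {1..r} \<Longrightarrow> \<omega> \<in> space M \<Longrightarrow> 0 \<le> S i k \<omega> \<and> S i k \<omega> \<le> 1"
  using S_range[where i=i and \<omega>=\<omega> and k=k] by auto

lemma int_ww:
  assumes i: "i \<in> {1..r}" and j: "j \<in> {1..r}"
  shows "(\<integral>\<omega>. sb_weight S i k \<omega> * sb_weight S j k \<omega> \<partial>M) =
     (\<integral>\<omega>. S i 0 \<omega> * S j 0 \<omega> \<partial>M) * (\<integral>\<omega>. (1 - S i 0 \<omega>) * (1 - S j 0 \<omega>) \<partial>M) ^ k"
proof -
  define h where "h m y = (if m = k then y i * y j else (1 - y i) * (1 - y j))" for m and y :: "nat \<Rightarrow> real"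
  have hm: "h m \<in> borel_measurable PS" for m
    unfolding h_def using i j by measurable
  have hb: "\<omega> \<in> space M \<Longrightarrow> \<bar>h m (Yv m \<omega>)\<bar> \<le> 1" for m \<omega>
    using S_bounds[OF i, of \<omega> m] S_bounds[OF j, of \<omega> m] i j
    by (auto simp: h_def Yv_def abs_mult intro!: mult_le_one)
  have ind: "indep_vars (\<lambda>_. borel) (\<lambda>m \<omega>. h m (Yv m \<omega>)) {..k}"
  proof -
    have "indep_vars (\<lambda>_. borel) (\<lambda>m \<omega>. h m (Yv m \<omega>)) UNIV"
      using indep_vars_compose2[OF S_indep, of h "\<lambda>_. borel"] hm by (simp add: Yv_def[abs_def])
    then show ?thesis using indep_vars_subset by blast
  qed
  have "(\<integral>\<omega>. (\<Prod>m\<in>{..k}. h m (Yv m \<omega>)) \<partial>M) = (\<Prod>m\<in>{..k}. \<integral>\<omega>. h m (Yv m \<omega>) \<partial>M)"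
    by (rule indep_vars_lebesgue_integral[OF _ ind])
       (auto intro!: integrable_const_bound[where B=1] hb measurable_compose[OF Yv_meas hm])
  also have "\<dots> = (\<Prod>m\<in>{..k}. \<integral>\<omega>. h m (Yv 0 \<omega>) \<partial>M)"
    by (intro prod.cong refl ident hm)
  also have "\<dots> = (\<integral>\<omega>. S i 0 \<omega> * S j 0 \<omega> \<partial>M) * (\<integral>\<omega>. (1 - S i 0 \<omega>) * (1 - S j 0 \<omega>) \<partial>M) ^ k"
  proof -
    have e: "{..k} = insert k {..<k}" by auto
    have "(\<Prod>m\<in>{..<k}. \<integral>\<omega>. h m (Yv 0 \<omega>) \<partial>M) = (\<Prod>m\<in>{..<k}. \<integral>\<omega>. (1 - S i 0 \<omega>) * (1 - S j 0 \<omega>) \<partial>M)"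
      using i j by (intro prod.cong refl) (simp add: h_def Yv_def)
    then show ?thesis unfolding e using i j by (simp add: h_def Yv_def)
  qed
  also have "(\<integral>\<omega>. (\<Prod>m\<in>{..k}. h m (Yv m \<omega>)) \<partial>M) = (\<integral>\<omega>. sb_weight S i k \<omega> * sb_weight S j k \<omega> \<partial>M)"
  proof -
    have "(\<Prod>m\<in>{..k}. h m (Yv m \<omega>)) = sb_weight S i k \<omega> * sb_weight S j k \<omega>" for \<omega>
    proof -
      have e: "{..k} = insert k {..<k}" by auto
      have "(\<Prod>m\<in>{..<k}. h m (Yv m \<omega>)) = (\<Prod>m\<in>{..<k}. (1 - S i m \<omega>) * (1 - S j m \<omega>))"
        using i j by (intro prod.cong refl) (simp add: h_def Yv_def)
      then show ?thesis
        unfolding e using i j by (simp add: h_def Yv_def sb_weight_def prod.distrib)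
    qed
    then show ?thesis by simp
  qed
  finally show ?thesis by simp
qed

lemma int_wwxx:
  assumes i: "i \<in> {1..r}" and j: "j \<in> {1..r}"
  shows "(\<integral>\<omega>. sb_weight S i k \<omega> * sb_weight S j l \<omega> * (xx k \<omega> * xx l \<omega>) \<partial>M) =
     (\<integral>\<omega>. sb_weight S i k \<omega> * sb_weight S j l \<omega> \<partial>M) * (if k = l then p else p\<^sup>2)"
proof -
  have "(\<integral>\<omega>. (F i k (Sig \<omega>) * F j l (Sig \<omega>)) * (X k (Phi \<omega>) * X l (Phi \<omega>)) \<partial>M) =
     (\<integral>\<omega>. F i k (Sig \<omega>) * F j l (Sig \<omega>) \<partial>M) * (\<integral>\<omega>. X k (Phi \<omega>) * X l (Phi \<omega>) \<partial>M)"
  proof (rule indep_prod[where f="\<lambda>\<sigma>. F i k \<sigma> * F j l \<sigma>" and g="\<lambda>\<psi>. X k \<psi> * X l \<psi>"])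
    show "(\<lambda>\<sigma>. F i k \<sigma> * F j l \<sigma>) \<in> borel_measurable PSS" using i j by measurable
    show "(\<lambda>\<psi>. X k \<psi> * X l \<psi>) \<in> borel_measurable PP" by measurable
    fix \<omega> assume \<omega>: "\<omega> \<in> space M"
    show "\<bar>F i k (Sig \<omega>) * F j l (Sig \<omega>)\<bar> \<le> 1"
      using w_bounds[OF i \<omega>, of k] w_bounds[OF j \<omega>, of l] w_Sig[OF i] w_Sig[OF j]
      by (auto simp: abs_mult intro!: mult_le_one)
    show "\<bar>X k (Phi \<omega>) * X l (Phi \<omega>)\<bar> \<le> 1" by (simp add: X_def indicator_def)
  qed
  then show ?thesis using int_xx2[of k l] by (simp add: w_Sig[OF i] w_Sig[OF j] xx_Phi)
qed

lemma int_wx: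
  assumes i: "i \<in> {1..r}"
  shows "(\<integral>\<omega>. sb_weight S i k \<omega> * xx k \<omega> \<partial>M) = (\<integral>\<omega>. sb_weight S i k \<omega> \<partial>M) * p"
proof -
  have "(\<integral>\<omega>. F i k (Sig \<omega>) * X k (Phi \<omega>) \<partial>M) =
     (\<integral>\<omega>. F i k (Sig \<omega>) \<partial>M) * (\<integral>\<omega>. X k (Phi \<omega>) \<partial>M)"
  proof (rule indep_prod)
    show "F i k \<in> borel_measurable PSS" using i by measurable
    show "X k \<in> borel_measurable PP" by measurable
    fix \<omega> assume \<omega>: "\<omega> \<in> space M"
    show "\<bar>F i k (Sig \<omega>)\<bar> \<le> 1"
      using w_bounds[OF i \<omega>, of k] w_Sig[OF i] by auto
    show "\<bar>X k (Phi \<omega>)\<bar> \<le> 1" by (simp add: X_def indicator_def)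
  qed
  then show ?thesis using int_xx[of k] by (simp add: w_Sig[OF i] xx_Phi)
qed

lemma G_eq: "G_meas S phi i \<omega> A = (\<Sum>k. sb_weight S i k \<omega> * xx k \<omega>)"
  by (simp add: G_meas_def xx_def)

lemma G_meas_meas[measurable]: "i \<in> {1..r} \<Longrightarrow> (\<lambda>\<omega>. G_meas S phi i \<omega> A) \<in> borel_measurable M"
  unfolding G_eq by (intro borel_measurable_suminf borel_measurable_times w_meas xx_meas)

lemma AE_G:
  assumes i: "i \<in> {1..r}"
  shows "AE \<omega> in M. ennreal (G_meas S phi i \<omega> A) = (\<Sum>k. ennreal (sb_weight S i k \<omega> * xx k \<omega>))
     \<and> 0 \<le> G_meas S phi i \<omega> A \<and> G_meas S phi i \<omega> A \<le> 1
     \<and> (\<Sum>k. ennreal (sb_weight S i k \<omega>)) = 1"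
  using W_sum[OF i] AE_space
proof eventually_elim
  case (elim \<omega>)
  note sums = elim(1)
  have \<omega>: "\<omega> \<in> space M" using elim(2) .
  have nn: "0 \<le> sb_weight S i k \<omega> * xx k \<omega>" for k
    using w_bounds[OF i \<omega>, of k] xx_bounds[of k \<omega>] by simp
  have le: "sb_weight S i k \<omega> * xx k \<omega> \<le> sb_weight S i k \<omega>" for k
    using w_bounds[OF i \<omega>, of k] xx_bounds[of k \<omega>] by (simp add: mult_left_le)
  have sw: "summable (\<lambda>k. sb_weight S i k \<omega>)" using sums elim by (auto simp: sums_iff)
  have sx: "summable (\<lambda>k. sb_weight S i k \<omega> * xx k \<omega>)"
    by (rule summable_comparison_test'[OF sw]) (use nn le in auto)
  have "(\<Sum>k. sb_weight S i k \<omega> * xx k \<omega>) \<le> (\<Sum>k. sb_weight S i k \<omega>)"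
    by (rule suminf_le[OF le sx sw])
  also have "\<dots> = 1" using elim by (simp add: sums_iff)
  finally have le1: "(\<Sum>k. sb_weight S i k \<omega> * xx k \<omega>) \<le> 1" .
  have "(\<Sum>k. ennreal (sb_weight S i k \<omega>)) = ennreal (\<Sum>k. sb_weight S i k \<omega>)"
    by (rule suminf_ennreal2) (use w_bounds[OF i \<omega>] sw in auto)
  also have "\<dots> = 1" using elim by (simp add: sums_iff)
  finally have s1: "(\<Sum>k. ennreal (sb_weight S i k \<omega>)) = 1" .
  show ?case
    unfolding G_eq using le1 s1 suminf_ennreal2[OF nn sx] suminf_nonneg[OF sx nn] by simp
qed

lemma int_w_nn:
  assumes i: "i \<in> {1..r}"
  shows "(\<integral>\<^sup>+\<omega>. ennreal (sb_weight S i k \<omega>) \<partial>M) = ennreal (\<integral>\<omega>. sb_weight S i k \<omega> \<partial>M)"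
  by (rule nn_integral_eq_integral)
     (use w_bounds[OF i] in \<open>auto intro!: integrable_const_bound[where B=1] w_meas[OF i]\<close>)

lemma nn_w:
  assumes i: "i \<in> {1..r}"
  shows "(\<Sum>k. ennreal (\<integral>\<omega>. sb_weight S i k \<omega> \<partial>M)) = 1"
proof -
  have "(\<Sum>k. ennreal (\<integral>\<omega>. sb_weight S i k \<omega> \<partial>M)) = (\<Sum>k. \<integral>\<^sup>+\<omega>. ennreal (sb_weight S i k \<omega>) \<partial>M)"
    by (simp add: int_w_nn[OF i])
  also have "\<dots> = (\<integral>\<^sup>+\<omega>. (\<Sum>k. ennreal (sb_weight S i k \<omega>)) \<partial>M)"
    by (rule nn_integral_suminf[symmetric]) (use i in measurable)
  also have "\<dots> = (\<integral>\<^sup>+\<omega>. 1 \<partial>M)"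
    by (rule nn_integral_cong_AE) (use AE_G[OF i] in \<open>eventually_elim, simp\<close>)
  also have "\<dots> = 1" by (simp add: emeasure_space_1)
  finally show ?thesis .
qed

lemma p_bounds: "0 < p" "p < 1"
  using A by (auto simp: p_def)

lemma EG:
  assumes i: "i \<in> {1..r}"
  shows "(\<integral>\<omega>. G_meas S phi i \<omega> A \<partial>M) = p"
proof -
  have int_wx_nn: "(\<integral>\<^sup>+\<omega>. ennreal (sb_weight S i k \<omega> * xx k \<omega>) \<partial>M) = ennreal (\<integral>\<omega>. sb_weight S i k \<omega> * xx k \<omega> \<partial>M)" for k
  proof (rule nn_integral_eq_integral)
    have b: "\<omega> \<in> space M \<Longrightarrow> 0 \<le> sb_weight S i k \<omega> * xx k \<omega> \<and> sb_weight S i k \<omega> * xx k \<omega> \<le> 1" for \<omega>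
      using w_bounds[OF i, of \<omega> k] xx_bounds[of k \<omega>] by (auto intro: mult_le_one)
    show "integrable M (\<lambda>\<omega>. sb_weight S i k \<omega> * xx k \<omega>)"
      by (rule integrable_const_bound[where B=1]) (use b in \<open>auto intro!: AE_I2 borel_measurable_times w_meas[OF i] xx_meas\<close>)
    show "AE \<omega> in M. 0 \<le> sb_weight S i k \<omega> * xx k \<omega>" using b by (auto intro: AE_I2)
  qed
  have "(\<integral>\<^sup>+\<omega>. ennreal (G_meas S phi i \<omega> A) \<partial>M) = (\<integral>\<^sup>+\<omega>. (\<Sum>k. ennreal (sb_weight S i k \<omega> * xx k \<omega>)) \<partial>M)"
    by (rule nn_integral_cong_AE) (use AE_G[OF i] in \<open>eventually_elim, simp\<close>)
  also have "\<dots> = (\<Sum>k. \<integral>\<^sup>+\<omega>. ennreal (sb_weight S i k \<omega> * xx k \<omega>) \<partial>M)"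
    by (rule nn_integral_suminf) (use i in measurable)
  also have "\<dots> = (\<Sum>k. ennreal (\<integral>\<omega>. sb_weight S i k \<omega> \<partial>M) * ennreal p)"
    using p_bounds w_bounds[OF i]
    by (simp add: int_wx_nn int_wx[OF i] ennreal_mult integral_nonneg)
  also have "\<dots> = ennreal p" by (simp add: nn_w[OF i])
  finally have *: "(\<integral>\<^sup>+\<omega>. ennreal (G_meas S phi i \<omega> A) \<partial>M) = ennreal p" .
  have "(\<integral>\<omega>. G_meas S phi i \<omega> A \<partial>M) = enn2real (\<integral>\<^sup>+\<omega>. ennreal (G_meas S phi i \<omega> A) \<partial>M)"
    by (rule integral_eq_nn_integral[OF G_meas_meas[OF i]]) (use AE_G[OF i] in \<open>eventually_elim, simp\<close>)
  then show ?thesis using * p_bounds by simp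
qed

lemma nn_int_unit:
  assumes f: "f \<in> borel_measurable M" and b: "\<And>\<omega>. \<omega> \<in> space M \<Longrightarrow> 0 \<le> f \<omega> \<and> f \<omega> \<le> 1"
  shows "(\<integral>\<^sup>+\<omega>. ennreal (f \<omega>) \<partial>M) = ennreal (\<integral>\<omega>. f \<omega> \<partial>M)"
proof (rule nn_integral_eq_integral)
  show "integrable M f"
    by (rule integrable_const_bound[where B=1]) (use b f in \<open>auto intro!: AE_I2\<close>)
  show "AE \<omega> in M. 0 \<le> f \<omega>" using b by (auto intro: AE_I2)
qed

lemma ww_bounds: "i \<in> {1..r} \<Longrightarrow> j \<in> {1..r} \<Longrightarrow> \<omega> \<in> space M \<Longrightarrow>
   0 \<le> sb_weight S i k \<omega> * sb_weight S j l \<omega> \<and> sb_weight S i k \<omega> * sb_weight S j l \<omega> \<le> 1"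
  using w_bounds[of i \<omega> k] w_bounds[of j \<omega> l] by (auto intro: mult_le_one)

lemma wwxx_bounds: "i \<in> {1..r} \<Longrightarrow> j \<in> {1..r} \<Longrightarrow> \<omega> \<in> space M \<Longrightarrow>
   0 \<le> sb_weight S i k \<omega> * sb_weight S j l \<omega> * (xx k \<omega> * xx l \<omega>) \<and>
   sb_weight S i k \<omega> * sb_weight S j l \<omega> * (xx k \<omega> * xx l \<omega>) \<le> 1"
  using ww_bounds[of i j \<omega> k l] xx_bounds[of k \<omega>] xx_bounds[of l \<omega>] by (auto intro: mult_le_one)

lemma sum_ww:
  assumes i: "i \<in> {1..r}" and j: "j \<in> {1..r}"
  shows "(\<Sum>k. \<Sum>l. ennreal (\<integral>\<omega>. sb_weight S i k \<omega> * sb_weight S j l \<omega> \<partial>M)) = 1"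
proof -
  note [measurable] = w_meas[OF i] w_meas[OF j]
  have "(\<Sum>k. \<Sum>l. ennreal (\<integral>\<omega>. sb_weight S i k \<omega> * sb_weight S j l \<omega> \<partial>M))
      = (\<Sum>k. \<Sum>l. \<integral>\<^sup>+\<omega>. ennreal (sb_weight S i k \<omega> * sb_weight S j l \<omega>) \<partial>M)"
    by (subst nn_int_unit) (use ww_bounds[OF i j] in auto)
  also have "\<dots> = (\<Sum>k. \<integral>\<^sup>+\<omega>. (\<Sum>l. ennreal (sb_weight S i k \<omega> * sb_weight S j l \<omega>)) \<partial>M)"
    by (subst nn_integral_suminf) auto
  also have "\<dots> = (\<integral>\<^sup>+\<omega>. (\<Sum>k. \<Sum>l. ennreal (sb_weight S i k \<omega> * sb_weight S j l \<omega>)) \<partial>M)"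
    by (subst nn_integral_suminf) auto
  also have "\<dots> = (\<integral>\<^sup>+\<omega>. 1 \<partial>M)"
  proof (rule nn_integral_cong_AE)
    show "AE \<omega> in M. (\<Sum>k. \<Sum>l. ennreal (sb_weight S i k \<omega> * sb_weight S j l \<omega>)) = 1"
      using AE_G[OF i] AE_G[OF j] AE_space
    proof eventually_elim
      case (elim \<omega>)
      have "(\<Sum>k. \<Sum>l. ennreal (sb_weight S i k \<omega> * sb_weight S j l \<omega>))
          = (\<Sum>k. \<Sum>l. ennreal (sb_weight S i k \<omega>) * ennreal (sb_weight S j l \<omega>))"
        using w_bounds[OF i elim(3)] w_bounds[OF j elim(3)] by (simp add: ennreal_mult)
      also have "\<dots> = (\<Sum>k. ennreal (sb_weight S i k \<omega>)) * (\<Sum>l. ennreal (sb_weight S j l \<omega>))"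
        by simp
      finally show ?case using elim by simp
    qed
  qed
  also have "\<dots> = 1" by (simp add: emeasure_space_1)
  finally show ?thesis .
qed

lemma sum_diag:
  assumes i: "i \<in> {1..r}" and j: "j \<in> {1..r}"
    and q: "(\<integral>\<omega>. (1 - S i 0 \<omega>) * (1 - S j 0 \<omega>) \<partial>M) < 1"
  shows "(\<Sum>k. ennreal (\<integral>\<omega>. sb_weight S i k \<omega> * sb_weight S j k \<omega> \<partial>M)) =
    ennreal ((\<integral>\<omega>. S i 0 \<omega> * S j 0 \<omega> \<partial>M) / (1 - (\<integral>\<omega>. (1 - S i 0 \<omega>) * (1 - S j 0 \<omega>) \<partial>M)))"
proof -
  define a where "a = (\<integral>\<omega>. S i 0 \<omega> * S j 0 \<omega> \<partial>M)"
  define qq where "qq = (\<integral>\<omega>. (1 - S i 0 \<omega>) * (1 - S j 0 \<omega>) \<partial>M)"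
  have a0: "0 \<le> a" unfolding a_def
    by (rule integral_nonneg_AE) (use S_bounds[OF i] S_bounds[OF j] in \<open>auto intro!: AE_I2\<close>)
  have q0: "0 \<le> qq" unfolding qq_def
    by (rule integral_nonneg_AE) (use S_bounds[OF i] S_bounds[OF j] in \<open>auto intro!: AE_I2\<close>)
  have q1: "qq < 1" using q by (simp add: qq_def)
  have sums: "(\<lambda>k. a * qq ^ k) sums (a / (1 - qq))"
    using sums_mult[OF geometric_sums[of qq], of a] q0 q1 by simp
  have "(\<Sum>k. ennreal (\<integral>\<omega>. sb_weight S i k \<omega> * sb_weight S j k \<omega> \<partial>M)) = (\<Sum>k. ennreal (a * qq ^ k))"
    by (simp add: int_ww[OF i j] a_def qq_def)
  also have "\<dots> = ennreal (\<Sum>k. a * qq ^ k)"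
    by (rule suminf_ennreal2) (use a0 q0 sums in \<open>auto simp: sums_iff\<close>)
  also have "\<dots> = ennreal (a / (1 - qq))" using sums by (simp add: sums_iff)
  finally show ?thesis by (simp add: a_def qq_def)
qed

end

context cs begin

lemma EGG:
  assumes i: "i \<in> {1..r}" and j: "j \<in> {1..r}"
    and q: "(\<integral>\<omega>. (1 - S i 0 \<omega>) * (1 - S j 0 \<omega>) \<partial>M) < 1"
  shows "(\<integral>\<omega>. G_meas S phi i \<omega> A * G_meas S phi j \<omega> A \<partial>M) =
    p\<^sup>2 + (p - p\<^sup>2) * ((\<integral>\<omega>. S i 0 \<omega> * S j 0 \<omega> \<partial>M) / (1 - (\<integral>\<omega>. (1 - S i 0 \<omega>) * (1 - S j 0 \<omega>) \<partial>M)))"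
proof -
  note [measurable] = w_meas[OF i] w_meas[OF j] G_meas_meas[OF i] G_meas_meas[OF j]
  define c where "c = (\<integral>\<omega>. S i 0 \<omega> * S j 0 \<omega> \<partial>M) / (1 - (\<integral>\<omega>. (1 - S i 0 \<omega>) * (1 - S j 0 \<omega>) \<partial>M))"
  define e where "e k l = (\<integral>\<omega>. sb_weight S i k \<omega> * sb_weight S j l \<omega> \<partial>M)" for k l
  have e0: "0 \<le> e k l" for k l unfolding e_def
    by (rule integral_nonneg_AE) (use ww_bounds[OF i j] in \<open>auto intro!: AE_I2\<close>)
  have pp: "0 \<le> p - p\<^sup>2" "0 \<le> p\<^sup>2" using p_bounds by (auto simp: power2_eq_square)
  have c0: "0 \<le> c" unfolding c_def
  proof (rule divide_nonneg_pos)
    show "0 \<le> (\<integral>\<omega>. S i 0 \<omega> * S j 0 \<omega> \<partial>M)"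
      by (rule integral_nonneg_AE) (use S_bounds[OF i] S_bounds[OF j] in \<open>auto intro!: AE_I2\<close>)
    show "0 < 1 - (\<integral>\<omega>. (1 - S i 0 \<omega>) * (1 - S j 0 \<omega>) \<partial>M)" using q by simp
  qed
  have "(\<integral>\<^sup>+\<omega>. ennreal (G_meas S phi i \<omega> A * G_meas S phi j \<omega> A) \<partial>M) =
     (\<integral>\<^sup>+\<omega>. (\<Sum>k. \<Sum>l. ennreal (sb_weight S i k \<omega> * sb_weight S j l \<omega> * (xx k \<omega> * xx l \<omega>))) \<partial>M)"
  proof (rule nn_integral_cong_AE)
    show "AE \<omega> in M. ennreal (G_meas S phi i \<omega> A * G_meas S phi j \<omega> A) =
       (\<Sum>k. \<Sum>l. ennreal (sb_weight S i k \<omega> * sb_weight S j l \<omega> * (xx k \<omega> * xx l \<omega>)))"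
      using AE_G[OF i] AE_G[OF j] AE_space
    proof eventually_elim
      case (elim \<omega>)
      have "(\<Sum>k. \<Sum>l. ennreal (sb_weight S i k \<omega> * sb_weight S j l \<omega> * (xx k \<omega> * xx l \<omega>)))
          = (\<Sum>k. \<Sum>l. ennreal (sb_weight S i k \<omega> * xx k \<omega>) * ennreal (sb_weight S j l \<omega> * xx l \<omega>))"
      proof (intro suminf_cong)
        fix k l
        show "ennreal (sb_weight S i k \<omega> * sb_weight S j l \<omega> * (xx k \<omega> * xx l \<omega>)) =
          ennreal (sb_weight S i k \<omega> * xx k \<omega>) * ennreal (sb_weight S j l \<omega> * xx l \<omega>)"
          using w_bounds[OF i elim(3), of k] w_bounds[OF j elim(3), of l] xx_bounds[of k \<omega>] xx_bounds[of l \<omega>]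
          by (subst ennreal_mult[symmetric]) (auto simp: mult_ac)
      qed
      also have "\<dots> = (\<Sum>k. ennreal (sb_weight S i k \<omega> * xx k \<omega>)) * (\<Sum>l. ennreal (sb_weight S j l \<omega> * xx l \<omega>))"
        by simp
      also have "\<dots> = ennreal (G_meas S phi i \<omega> A) * ennreal (G_meas S phi j \<omega> A)"
        using elim by simp
      also have "\<dots> = ennreal (G_meas S phi i \<omega> A * G_meas S phi j \<omega> A)"
        using elim by (simp add: ennreal_mult)
      finally show ?case by simp
    qed
  qed
  also have "\<dots> = (\<Sum>k. \<integral>\<^sup>+\<omega>. (\<Sum>l. ennreal (sb_weight S i k \<omega> * sb_weight S j l \<omega> * (xx k \<omega> * xx l \<omega>))) \<partial>M)"
    by (subst nn_integral_suminf) auto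
  also have "\<dots> = (\<Sum>k. \<Sum>l. \<integral>\<^sup>+\<omega>. ennreal (sb_weight S i k \<omega> * sb_weight S j l \<omega> * (xx k \<omega> * xx l \<omega>)) \<partial>M)"
    by (subst nn_integral_suminf) auto
  also have "\<dots> = (\<Sum>k. \<Sum>l. ennreal (e k l * (if k = l then p else p\<^sup>2)))"
    by (subst nn_int_unit) (use wwxx_bounds[OF i j] in \<open>auto simp: int_wwxx[OF i j] e_def\<close>)
  also have "\<dots> = (\<Sum>k. \<Sum>l. ennreal (e k l) * ennreal (p\<^sup>2) + (if l = k then ennreal (e k k) * ennreal (p - p\<^sup>2) else 0))"
  proof (intro suminf_cong)
    fix k l
    show "ennreal (e k l * (if k = l then p else p\<^sup>2)) =
        ennreal (e k l) * ennreal (p\<^sup>2) + (if l = k then ennreal (e k k) * ennreal (p - p\<^sup>2) else 0)"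
    proof (cases "k = l")
      case True
      have "e k k * p = e k k * p\<^sup>2 + e k k * (p - p\<^sup>2)" by (simp add: algebra_simps)
      then have "ennreal (e k k * p) = ennreal (e k k * p\<^sup>2 + e k k * (p - p\<^sup>2))" by simp
      also have "\<dots> = ennreal (e k k * p\<^sup>2) + ennreal (e k k * (p - p\<^sup>2))"
        by (rule ennreal_plus) (use e0[of k k] pp in auto)
      also have "\<dots> = ennreal (e k k) * ennreal (p\<^sup>2) + ennreal (e k k) * ennreal (p - p\<^sup>2)"
        using e0[of k k] pp by (simp add: ennreal_mult)
      finally show ?thesis using True by simp
    next
      case False
      then show ?thesis using e0[of k l] pp by (simp add: ennreal_mult)
    qed
  qed
  also have "\<dots> = (\<Sum>k. (\<Sum>l. ennreal (e k l)) * ennreal (p\<^sup>2) + ennreal (e k k) * ennreal (p - p\<^sup>2))"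
  proof (intro suminf_cong)
    fix k
    have "(\<Sum>l. ennreal (e k l) * ennreal (p\<^sup>2) + (if l = k then ennreal (e k k) * ennreal (p - p\<^sup>2) else 0))
       = (\<Sum>l. ennreal (e k l) * ennreal (p\<^sup>2)) + (\<Sum>l. (if l = k then ennreal (e k k) * ennreal (p - p\<^sup>2) else 0))"
      by (rule suminf_add[symmetric]) auto
    also have "(\<Sum>l. (if l = k then ennreal (e k k) * ennreal (p - p\<^sup>2) else 0)) = ennreal (e k k) * ennreal (p - p\<^sup>2)"
      using sums_single[of k "\<lambda>_. ennreal (e k k) * ennreal (p - p\<^sup>2)"] by (simp add: sums_iff)
    finally show "(\<Sum>l. ennreal (e k l) * ennreal (p\<^sup>2) + (if l = k then ennreal (e k k) * ennreal (p - p\<^sup>2) else 0))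
       = (\<Sum>l. ennreal (e k l)) * ennreal (p\<^sup>2) + ennreal (e k k) * ennreal (p - p\<^sup>2)" by simp
  qed
  also have "\<dots> = (\<Sum>k. \<Sum>l. ennreal (e k l)) * ennreal (p\<^sup>2) + (\<Sum>k. ennreal (e k k)) * ennreal (p - p\<^sup>2)"
    by (subst suminf_add[symmetric]) auto
  also have "\<dots> = ennreal (p\<^sup>2 + (p - p\<^sup>2) * c)"
  proof -
    have s1: "(\<Sum>k. \<Sum>l. ennreal (e k l)) = 1" using sum_ww[OF i j] by (simp add: e_def)
    have s2: "(\<Sum>k. ennreal (e k k)) = ennreal c" using sum_diag[OF i j q] by (simp add: e_def c_def)
    have "ennreal (p\<^sup>2 + (p - p\<^sup>2) * c) = ennreal (p\<^sup>2) + ennreal ((p - p\<^sup>2) * c)"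
      by (rule ennreal_plus) (use pp c0 in auto)
    also have "\<dots> = ennreal (p\<^sup>2) + ennreal c * ennreal (p - p\<^sup>2)"
      using pp c0 by (simp add: ennreal_mult mult.commute)
    finally show ?thesis using s1 s2 by simp
  qed
  finally have *: "(\<integral>\<^sup>+\<omega>. ennreal (G_meas S phi i \<omega> A * G_meas S phi j \<omega> A) \<partial>M) = ennreal (p\<^sup>2 + (p - p\<^sup>2) * c)" .
  have "(\<integral>\<omega>. G_meas S phi i \<omega> A * G_meas S phi j \<omega> A \<partial>M) =
      enn2real (\<integral>\<^sup>+\<omega>. ennreal (G_meas S phi i \<omega> A * G_meas S phi j \<omega> A) \<partial>M)"
  proof (rule integral_eq_nn_integral)
    show "(\<lambda>\<omega>. G_meas S phi i \<omega> A * G_meas S phi j \<omega> A) \<in> borel_measurable M" by measurable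
    show "AE \<omega> in M. 0 \<le> G_meas S phi i \<omega> A * G_meas S phi j \<omega> A"
      using AE_G[OF i] AE_G[OF j] by eventually_elim simp
  qed
  moreover have nn: "0 \<le> p\<^sup>2 + (p - p\<^sup>2) * c" using pp c0 by simp
  ultimately have "(\<integral>\<omega>. G_meas S phi i \<omega> A * G_meas S phi j \<omega> A \<partial>M) = p\<^sup>2 + (p - p\<^sup>2) * c"
    using * by simp
  then show ?thesis by (simp add: c_def)
qed

lemma S_int: "i \<in> {1..r} \<Longrightarrow> integrable M (S i k)"
  by (rule integrable_const_bound[where B=1]) (use S_bounds[of i] S_meas[of i k] in \<open>auto intro!: AE_I2\<close>)

lemma S2_int: "i \<in> {1..r} \<Longrightarrow> integrable M (\<lambda>\<omega>. (S i k \<omega>)\<^sup>2)"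
  by (rule integrable_const_bound[where B=1])
     (use S_bounds[of i] S_meas[of i k] in \<open>auto intro!: AE_I2 simp: abs_le_iff power2_eq_square intro: mult_le_one\<close>)

lemma int_S_k: "i \<in> {1..r} \<Longrightarrow> (\<integral>\<omega>. S i k \<omega> \<partial>M) = (\<integral>\<omega>. S i 0 \<omega> \<partial>M)"
proof -
  assume i: "i \<in> {1..r}"
  have "(\<integral>\<omega>. (\<lambda>y. y i) (Yv k \<omega>) \<partial>M) = (\<integral>\<omega>. (\<lambda>y. y i) (Yv 0 \<omega>) \<partial>M)"
    by (rule ident) (rule comp1[OF i])
  then show ?thesis using i by (simp add: Yv_def)
qed

lemma m_pos: assumes i: "i \<in> {1..r}" shows "0 < (\<integral>\<omega>. S i 0 \<omega> \<partial>M)"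
proof (rule ccontr)
  assume "\<not> 0 < (\<integral>\<omega>. S i 0 \<omega> \<partial>M)"
  moreover have "0 \<le> (\<integral>\<omega>. S i 0 \<omega> \<partial>M)"
    by (rule integral_nonneg_AE) (use S_bounds[OF i] in \<open>auto intro!: AE_I2\<close>)
  ultimately have z: "(\<integral>\<omega>. S i k \<omega> \<partial>M) = 0" for k using int_S_k[OF i, of k] by simp
  have "AE \<omega> in M. S i k \<omega> = 0" for k
    using integral_nonneg_eq_0_iff_AE[OF S_int[OF i], of k] z[of k] S_bounds[OF i]
    by (auto intro: AE_I2)
  then have "AE \<omega> in M. \<forall>k. S i k \<omega> = 0" by (simp add: AE_all_countable)
  then have "AE \<omega> in M. False" using W_sum[OF i]
  proof eventually_elim
    case (elim \<omega>)
    then have "(\<lambda>k. sb_weight S i k \<omega>) = (\<lambda>k. 0)" by (auto simp: sb_weight_def fun_eq_iff)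
    with elim(2) have "(\<lambda>k. 0::real) sums 1" by simp
    then show False using sums_zero sums_unique2 by fastforce
  qed
  then show False by (simp add: AE_False)
qed

lemma s_pos: assumes i: "i \<in> {1..r}" shows "0 < (\<integral>\<omega>. (S i 0 \<omega>)\<^sup>2 \<partial>M)"
proof (rule ccontr)
  assume "\<not> 0 < (\<integral>\<omega>. (S i 0 \<omega>)\<^sup>2 \<partial>M)"
  moreover have "0 \<le> (\<integral>\<omega>. (S i 0 \<omega>)\<^sup>2 \<partial>M)" by (rule integral_nonneg_AE) auto
  ultimately have "(\<integral>\<omega>. (S i 0 \<omega>)\<^sup>2 \<partial>M) = 0" by simp
  then have "AE \<omega> in M. (S i 0 \<omega>)\<^sup>2 = 0"
    using integral_nonneg_eq_0_iff_AE[OF S2_int[OF i, of 0]] by auto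
  then have "AE \<omega> in M. S i 0 \<omega> = 0" by auto
  then have "(\<integral>\<omega>. S i 0 \<omega> \<partial>M) = (\<integral>\<omega>. 0 \<partial>M)" by (rule integral_cong_AE[rotated 2]) (use S_meas[OF i] in auto)
  then show False using m_pos[OF i] by simp
qed

lemma s_le_m: assumes i: "i \<in> {1..r}" shows "(\<integral>\<omega>. (S i 0 \<omega>)\<^sup>2 \<partial>M) \<le> (\<integral>\<omega>. S i 0 \<omega> \<partial>M)"
  by (rule integral_mono[OF S2_int[OF i] S_int[OF i]])
     (use S_bounds[OF i] in \<open>auto simp: power2_eq_square intro: mult_left_le\<close>)

lemma q_lt: assumes i: "i \<in> {1..r}" and j: "j \<in> {1..r}"
  shows "(\<integral>\<omega>. (1 - S i 0 \<omega>) * (1 - S j 0 \<omega>) \<partial>M) < 1"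
proof -
  have int1: "integrable M (\<lambda>\<omega>. 1 - S i 0 \<omega>)" using S_int[OF i] by simp
  have int2: "integrable M (\<lambda>\<omega>. (1 - S i 0 \<omega>) * (1 - S j 0 \<omega>))"
    by (rule integrable_const_bound[where B=1])
       (use S_bounds[OF i] S_bounds[OF j] S_meas[OF i] S_meas[OF j] in \<open>auto intro!: AE_I2 simp: abs_mult intro: mult_le_one\<close>)
  have "(\<integral>\<omega>. (1 - S i 0 \<omega>) * (1 - S j 0 \<omega>) \<partial>M) \<le> (\<integral>\<omega>. 1 - S i 0 \<omega> \<partial>M)"
    by (rule integral_mono[OF int2 int1]) (use S_bounds[OF i] S_bounds[OF j] in \<open>auto intro: mult_left_le\<close>)
  also have "\<dots> = 1 - (\<integral>\<omega>. S i 0 \<omega> \<partial>M)" using S_int[OF i] by (simp add: prob_space)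
  finally show ?thesis using m_pos[OF i] by simp
qed

lemma q_same: assumes i: "i \<in> {1..r}"
  shows "1 - (\<integral>\<omega>. (1 - S i 0 \<omega>) * (1 - S i 0 \<omega>) \<partial>M) =
    2 * (\<integral>\<omega>. S i 0 \<omega> \<partial>M) - (\<integral>\<omega>. (S i 0 \<omega>)\<^sup>2 \<partial>M)"
proof -
  have "(\<lambda>\<omega>. (1 - S i 0 \<omega>) * (1 - S i 0 \<omega>)) = (\<lambda>\<omega>. 1 - (2 * S i 0 \<omega> - (S i 0 \<omega>)\<^sup>2))"
    by (simp add: fun_eq_iff power2_eq_square algebra_simps)
  moreover have "(\<integral>\<omega>. 1 - (2 * S i 0 \<omega> - (S i 0 \<omega>)\<^sup>2) \<partial>M) = 1 - (2 * (\<integral>\<omega>. S i 0 \<omega> \<partial>M) - (\<integral>\<omega>. (S i 0 \<omega>)\<^sup>2 \<partial>M))"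
    using S_int[OF i, of 0] S2_int[OF i, of 0] by (simp add: prob_space)
  ultimately show ?thesis by simp
qed

lemma covar_eq:
  assumes U: "integrable M U" and V: "integrable M V" and UV: "integrable M (\<lambda>\<omega>. U \<omega> * V \<omega>)"
    and EU: "integral\<^sup>L M U = p" and EV: "integral\<^sup>L M V = p"
  shows "covar M U V = (\<integral>\<omega>. U \<omega> * V \<omega> \<partial>M) - p\<^sup>2"
proof -
  have "(\<lambda>\<omega>. (U \<omega> - p) * (V \<omega> - p)) = (\<lambda>\<omega>. U \<omega> * V \<omega> - (p * U \<omega> + p * V \<omega> - p\<^sup>2))"
    by (simp add: fun_eq_iff algebra_simps power2_eq_square)
  then have "covar M U V = (\<integral>\<omega>. U \<omega> * V \<omega> - (p * U \<omega> + p * V \<omega> - p\<^sup>2) \<partial>M)"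
    by (simp add: covar_def EU EV)
  also have "\<dots> = (\<integral>\<omega>. U \<omega> * V \<omega> \<partial>M) - (p * p + p * p - p\<^sup>2)"
    using U V UV EU EV by (simp add: prob_space)
  finally show ?thesis by (simp add: power2_eq_square)
qed

lemma alg:
  fixes d c s1 s2 D1 D2 :: real
  assumes "d > 0" "s1 > 0" "s2 > 0" "D1 > 0" "D2 > 0"
  shows "d * c / (sqrt (d * (s1 / D1)) * sqrt (d * (s2 / D2))) = c * sqrt (D1 * D2 / (s1 * s2))"
proof -
  have "sqrt (d * (s1 / D1)) * sqrt (d * (s2 / D2)) = sqrt (d * (s1 / D1) * (d * (s2 / D2)))"
    by (rule real_sqrt_mult[symmetric])
  also have "\<dots> = sqrt (d\<^sup>2 * (s1 * s2 / (D1 * D2)))"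
    by (rule arg_cong[where f=sqrt]) (simp add: power2_eq_square field_simps)
  also have "\<dots> = sqrt (d\<^sup>2) * sqrt (s1 * s2 / (D1 * D2))" by (rule real_sqrt_mult)
  also have "\<dots> = d * (sqrt (s1 * s2) / sqrt (D1 * D2))" using assms by (simp add: real_sqrt_divide)
  finally have e: "sqrt (d * (s1 / D1)) * sqrt (d * (s2 / D2)) = d * (sqrt (s1 * s2) / sqrt (D1 * D2))" .
  have "sqrt (D1 * D2 / (s1 * s2)) = sqrt (D1 * D2) / sqrt (s1 * s2)" by (simp add: real_sqrt_divide)
  moreover have "sqrt (s1 * s2) > 0" "sqrt (D1 * D2) > 0" using assms by auto
  ultimately show ?thesis unfolding e using assms by (simp add: field_simps)
qed

lemma G_int: "i \<in> {1..r} \<Longrightarrow> integrable M (\<lambda>\<omega>. G_meas S phi i \<omega> A)"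
proof -
  assume i: "i \<in> {1..r}"
  show ?thesis
  proof (rule integrable_const_bound[where B=1])
    show "AE \<omega> in M. norm (G_meas S phi i \<omega> A) \<le> 1"
      using AE_G[OF i] by eventually_elim auto
  qed (rule G_meas_meas[OF i])
qed

lemma GG_int: "i \<in> {1..r} \<Longrightarrow> j \<in> {1..r} \<Longrightarrow> integrable M (\<lambda>\<omega>. G_meas S phi i \<omega> A * G_meas S phi j \<omega> A)"
proof -
  assume i: "i \<in> {1..r}" and j: "j \<in> {1..r}"
  note [measurable] = G_meas_meas[OF i] G_meas_meas[OF j]
  show ?thesis
  proof (rule integrable_const_bound[where B=1])
    show "AE \<omega> in M. norm (G_meas S phi i \<omega> A * G_meas S phi j \<omega> A) \<le> 1"
      using AE_G[OF i] AE_G[OF j] by eventually_elim (auto simp: abs_mult intro: mult_le_one)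
  qed measurable
qed

lemma covar_G:
  assumes i: "i \<in> {1..r}" and j: "j \<in> {1..r}"
  shows "covar M (\<lambda>\<omega>. G_meas S phi i \<omega> A) (\<lambda>\<omega>. G_meas S phi j \<omega> A) =
    (p - p\<^sup>2) * ((\<integral>\<omega>. S i 0 \<omega> * S j 0 \<omega> \<partial>M) / (1 - (\<integral>\<omega>. (1 - S i 0 \<omega>) * (1 - S j 0 \<omega>) \<partial>M)))"
  using covar_eq[OF G_int[OF i] G_int[OF j] GG_int[OF i j] EG[OF i] EG[OF j]] EGG[OF i j q_lt[OF i j]]
  by simp

lemma main:
  "cor M (\<lambda>\<omega>. G_meas S phi 1 \<omega> A) (\<lambda>\<omega>. G_meas S phi 2 \<omega> A) =
     (integral\<^sup>L M (\<lambda>\<omega>. S 1 0 \<omega> * S 2 0 \<omega>)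
        / (1 - integral\<^sup>L M (\<lambda>\<omega>. (1 - S 1 0 \<omega>) * (1 - S 2 0 \<omega>))))
     * sqrt ((2 * integral\<^sup>L M (S 1 0) - integral\<^sup>L M (\<lambda>\<omega>. (S 1 0 \<omega>)\<^sup>2))
             * (2 * integral\<^sup>L M (S 2 0) - integral\<^sup>L M (\<lambda>\<omega>. (S 2 0 \<omega>)\<^sup>2))
             / (integral\<^sup>L M (\<lambda>\<omega>. (S 1 0 \<omega>)\<^sup>2) * integral\<^sup>L M (\<lambda>\<omega>. (S 2 0 \<omega>)\<^sup>2)))"
proof -
  have i1: "(1::nat) \<in> {1..r}" and i2: "(2::nat) \<in> {1..r}" using r by auto
  have sq: "(\<integral>\<omega>. S i 0 \<omega> * S i 0 \<omega> \<partial>M) = (\<integral>\<omega>. (S i 0 \<omega>)\<^sup>2 \<partial>M)" for i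
    by (simp add: power2_eq_square)
  have c11: "covar M (\<lambda>\<omega>. G_meas S phi 1 \<omega> A) (\<lambda>\<omega>. G_meas S phi 1 \<omega> A) =
     (p - p\<^sup>2) * ((\<integral>\<omega>. (S 1 0 \<omega>)\<^sup>2 \<partial>M) / (2 * (\<integral>\<omega>. S 1 0 \<omega> \<partial>M) - (\<integral>\<omega>. (S 1 0 \<omega>)\<^sup>2 \<partial>M)))"
    using covar_G[OF i1 i1] q_same[OF i1] sq[of 1] by simp
  have c22: "covar M (\<lambda>\<omega>. G_meas S phi 2 \<omega> A) (\<lambda>\<omega>. G_meas S phi 2 \<omega> A) =
     (p - p\<^sup>2) * ((\<integral>\<omega>. (S 2 0 \<omega>)\<^sup>2 \<partial>M) / (2 * (\<integral>\<omega>. S 2 0 \<omega> \<partial>M) - (\<integral>\<omega>. (S 2 0 \<omega>)\<^sup>2 \<partial>M)))"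
    using covar_G[OF i2 i2] q_same[OF i2] sq[of 2] by simp
  have dpos: "p - p\<^sup>2 > 0" using p_bounds by (simp add: power2_eq_square)
  have D1: "2 * (\<integral>\<omega>. S 1 0 \<omega> \<partial>M) - (\<integral>\<omega>. (S 1 0 \<omega>)\<^sup>2 \<partial>M) > 0"
    using s_le_m[OF i1] m_pos[OF i1] by simp
  have D2: "2 * (\<integral>\<omega>. S 2 0 \<omega> \<partial>M) - (\<integral>\<omega>. (S 2 0 \<omega>)\<^sup>2 \<partial>M) > 0"
    using s_le_m[OF i2] m_pos[OF i2] by simp
  show ?thesis
    unfolding cor_def covar_G[OF i1 i2] c11 c22
    by (rule alg[OF dpos s_pos[OF i1] s_pos[OF i2] D1 D2])
qed

end

theorem corollary1:
  fixes M :: "'a measure" and H0 :: "'x::polish_space measure"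
    and r :: nat and S :: "nat \<Rightarrow> nat \<Rightarrow> 'a \<Rightarrow> real" and phi :: "nat \<Rightarrow> 'a \<Rightarrow> 'x"
    and A :: "'x set"
  assumes M: "prob_space M"
    and r: "r \<ge> 2"
    and H0: "prob_space H0" "sets H0 = sets borel"
    and phi_indep: "prob_space.indep_vars M (\<lambda>_. borel) phi UNIV"
    and phi_law: "\<And>k. distr M borel (phi k) = H0"
    and S_range: "\<And>i k \<omega>. i \<in> {1..r} \<Longrightarrow> \<omega> \<in> space M \<Longrightarrow> S i k \<omega> \<in> {0..1}"
    and S_indep: "prob_space.indep_vars M (\<lambda>_. PiM {1..r} (\<lambda>_. borel))
                    (\<lambda>k \<omega>. restrict (\<lambda>i. S i k \<omega>) {1..r}) UNIV"
    and S_ident: "\<And>k. distr M (PiM {1..r} (\<lambda>_. borel)) (\<lambda>\<omega>. restrict (\<lambda>i. S i k \<omega>) {1..r})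
                     = distr M (PiM {1..r} (\<lambda>_. borel)) (\<lambda>\<omega>. restrict (\<lambda>i. S i 0 \<omega>) {1..r})"
    and S_phi_indep: "prob_space.indep_set M
          {(\<lambda>\<omega> k. restrict (\<lambda>i. S i k \<omega>) {1..r}) -` B \<inter> space M | B.
              B \<in> sets (PiM UNIV (\<lambda>_. PiM {1..r} (\<lambda>_. borel)))}
          {(\<lambda>\<omega> k. phi k \<omega>) -` B \<inter> space M | B. B \<in> sets (PiM UNIV (\<lambda>_. borel))}"
    and W_sum: "\<And>i. i \<in> {1..r} \<Longrightarrow> AE \<omega> in M. (\<lambda>k. sb_weight S i k \<omega>) sums 1"
    and A: "A \<in> sets borel" "0 < measure H0 A" "measure H0 A < 1"
  shows "cor M (\<lambda>\<omega>. G_meas S phi 1 \<omega> A) (\<lambda>\<omega>. G_meas S phi 2 \<omega> A) =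
     (integral\<^sup>L M (\<lambda>\<omega>. S 1 0 \<omega> * S 2 0 \<omega>)
        / (1 - integral\<^sup>L M (\<lambda>\<omega>. (1 - S 1 0 \<omega>) * (1 - S 2 0 \<omega>))))
     * sqrt ((2 * integral\<^sup>L M (S 1 0) - integral\<^sup>L M (\<lambda>\<omega>. (S 1 0 \<omega>)\<^sup>2))
             * (2 * integral\<^sup>L M (S 2 0) - integral\<^sup>L M (\<lambda>\<omega>. (S 2 0 \<omega>)\<^sup>2))
             / (integral\<^sup>L M (\<lambda>\<omega>. (S 1 0 \<omega>)\<^sup>2) * integral\<^sup>L M (\<lambda>\<omega>. (S 2 0 \<omega>)\<^sup>2)))"
proof -
  interpret cs M H0 r S phi A
    by (rule cs.intro) (fact assms)+
  show ?thesis by (rule main)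
qed

end
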